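(* Let $n\ge1$, $\gamma>0$, and let $g_i,f_j:[0,1]\to[0,\infty)$, $i,j=1,\dots,n$, be $\mathcal C^1$ functions. Consider the system $$\dot{x}_i = -x_i g_i(x_i)\sum_{j=1}^n f_j(y_j)y_j,\qquad \dot{y}_i = x_i g_i(x_i)\sum_{j=1}^n f_j(y_j)y_j-\gamma y_i,\qquad i=1,\dots,n,$$ with initial condition $(x(0),y(0))\in\mathcal S=\{(x,y)\in[0,1]^{2n}:x+y\le\mathbf 1\}$ satisfying $\mathbf 0\lneq x(0)\le\mathbf 1-y(0)\lneq\mathbf 1$. Assume that $g(x)>\mathbf 0$ and $f(y)>\mathbf 0$ for all $(x,y)\in\mathcal S$, that $x_i\mapsto x_ig_i(x_i)$ is increasing for every $i$, and that $y_j\mapsto f_j(y_j)y_j$ is increasing and concave for every $j$. Let $\bar y(t)=\sum_{j=1}^n f_j(y_j(t))\,y_j(t)$. Then: (i) if $\dot{\bar y}(0)\le 0$, then $\bar y(t)$ is strictly decreasing for $t\ge0$; (ii) if $\dot{\bar y}(0)>0$, then there exists $\hat t>0$ such that $\bar y(t)$ is strictly increasing on $[0,\hat t]$ and strictly decreasing on $[\hat t,+\infty)$.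
   Context: Vector inequalities are entrywise: $u\le v$ means $u_i\le v_i$ for all $i$, $u<v$ means $u_i<v_i$ for all $i$, and $u\lneq v$ means $u\le v$ with $u_j<v_j$ for some $j$. $g(x)$ denotes the vector $(g_1(x_1),\dots,g_n(x_n))$ and $f(y)$ the vector $(f_1(y_1),\dots,f_n(y_n))$. The system is the network SIR model with rank-one interaction matrix $A_{ij}(x,y)=g_i(x_i)f_j(y_j)$. *)

theory Defs
  imports "HOL-Analysis.Analysis"
begin

definition C1_on_unit :: "(real \<Rightarrow> real) \<Rightarrow> bool" where
  "C1_on_unit h \<longleftrightarrow> (\<exists>h'. continuous_on {0..1} h' \<and>
      (\<forall>s\<in>{0..1}. (h has_real_derivative h' s) (at s within {0..1})))"

text \<open>The state space S = {(x,y) in [0,1]^(2n) : x + y <= 1}; vectors are functions on nat,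
  only the indices below n matter.\<close>
definition S_set :: "nat \<Rightarrow> ((nat \<Rightarrow> real) \<times> (nat \<Rightarrow> real)) set" where
  "S_set n = {(x, y). \<forall>i<n. 0 \<le> x i \<and> x i \<le> 1 \<and> 0 \<le> y i \<and> y i \<le> 1 \<and> x i + y i \<le> 1}"

definition ybar :: "nat \<Rightarrow> (nat \<Rightarrow> real \<Rightarrow> real) \<Rightarrow> (nat \<Rightarrow> real) \<Rightarrow> real" where
  "ybar n f y = (\<Sum>j<n. f j (y j) * y j)"

end

theory Submission
  imports Defs
begin

lemma nb1: fixes a b :: real assumes "a < b" shows "at a within {a<..<b} \<noteq> bot"
  using assms by (subst at_within_eq_bot_iff) (auto simp del: closure_greaterThanLessThan simp: closure_greaterThanLessThan)
lemma nb2: fixes a b :: real assumes "a < b" shows "at b within {a<..<b} \<noteq> bot"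
  using assms by (subst at_within_eq_bot_iff) (auto simp del: closure_greaterThanLessThan simp: closure_greaterThanLessThan)

lemma ev_in: "eventually (\<lambda>t. t \<in> S) (at a within S)"
  by (simp add: eventually_at_filter)

lemma concave_sub: "concave_on {0..1} F \<Longrightarrow> 0 \<le> a \<Longrightarrow> b \<le> (1::real) \<Longrightarrow> concave_on {a..b} F"
  unfolding concave_on_def apply (rule convex_on_subset[of "{0..1}"]) apply assumption apply simp
  by (rule convex_real_interval)

lemma concave_tangent:
  fixes F :: "real \<Rightarrow> real"
  assumes conc: "concave_on {0..1} F" and der: "(F has_real_derivative D) (at c within {0..1})"
    and c: "c \<in> {0..1}" and x: "x \<in> {0..1}"
  shows "F x - F c \<le> D * (x - c)"
proof (cases x c rule: linorder_cases)
  case less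
  let ?q = "(F x - F c) / (x - c)"
  have "(F has_real_derivative D) (at c within {x<..<c})"
    by (rule DERIV_subset[OF der]) (use c x in auto)
  hence lim: "((\<lambda>t. (F t - F c) / (t - c)) \<longlongrightarrow> D) (at c within {x<..<c})"
    by (simp add: has_field_derivative_iff)
  have cx: "concave_on {x..c} F" by (rule concave_sub[OF conc]) (use c x in auto)
  have "eventually (\<lambda>t. (F t - F c) / (t - c) \<le> ?q) (at c within {x<..<c})"
    using ev_in
  proof (rule eventually_mono)
    fix t :: real assume t: "t \<in> {x<..<c}"
    have "F t \<ge> (F x - F c) / (c - x) * (c - t) + F c"
      using concave_onD_Icc''[OF cx, of t] t by simp
    moreover have "(F x - F c) / (c - x) * (c - t) = ?q * (t - c)"
    proof -
      have "(F x - F c) / (c - x) = - ?q" using less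
        by (metis minus_diff_eq minus_divide_right)
      thus ?thesis by (metis minus_diff_eq mult_minus_left mult_minus_right)
    qed
    ultimately have "?q * (t - c) \<le> F t - F c" by linarith
    thus "(F t - F c) / (t - c) \<le> ?q" using t
      by (subst neg_divide_le_eq) auto
  qed
  from tendsto_upperbound[OF lim this nb2[OF less]] have "D \<le> ?q" .
  hence "?q * (x - c) \<le> D * (x - c)" using less by (intro mult_right_mono_neg) auto
  moreover have "?q * (x - c) = F x - F c" using less by simp
  ultimately show ?thesis by linarith
next
  case equal thus ?thesis by simp
next
  case greater
  let ?q = "(F x - F c) / (x - c)"
  have "(F has_real_derivative D) (at c within {c<..<x})"
    by (rule DERIV_subset[OF der]) (use c x in auto)
  hence lim: "((\<lambda>t. (F t - F c) / (t - c)) \<longlongrightarrow> D) (at c within {c<..<x})"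
    by (simp add: has_field_derivative_iff)
  have cx: "concave_on {c..x} F" by (rule concave_sub[OF conc]) (use c x in auto)
  have "eventually (\<lambda>t. ?q \<le> (F t - F c) / (t - c)) (at c within {c<..<x})"
    using ev_in
  proof (rule eventually_mono)
    fix t :: real assume t: "t \<in> {c<..<x}"
    have "F t \<ge> (F x - F c) / (x - c) * (t - c) + F c"
      using concave_onD_Icc'[OF cx, of t] t by simp
    hence "?q * (t - c) \<le> F t - F c" by linarith
    thus "?q \<le> (F t - F c) / (t - c)" using t
      by (subst pos_le_divide_eq) auto
  qed
  from tendsto_lowerbound[OF lim this nb1[OF greater]] have "?q \<le> D" .
  hence "?q * (x - c) \<le> D * (x - c)" using greater by (intro mult_right_mono) auto
  moreover have "?q * (x - c) = F x - F c" using greater by simp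
  ultimately show ?thesis by linarith
qed

lemma deriv_nonneg_mono:
  fixes F :: "real \<Rightarrow> real"
  assumes mono: "strict_mono_on {0..1} F" and der: "(F has_real_derivative D) (at c within {0..1})"
    and c: "c \<in> {0..1}"
  shows "0 \<le> D"
proof (cases "c < 1")
  case True
  have "(F has_real_derivative D) (at c within {c<..<1})"
    by (rule DERIV_subset[OF der]) (use c in auto)
  hence lim: "((\<lambda>t. (F t - F c) / (t - c)) \<longlongrightarrow> D) (at c within {c<..<1})"
    by (simp add: has_field_derivative_iff)
  have "eventually (\<lambda>t. 0 \<le> (F t - F c) / (t - c)) (at c within {c<..<1})"
    using ev_in
  proof (rule eventually_mono)
    fix t :: real assume t: "t \<in> {c<..<1}"
    have "F c < F t" using mono c t by (auto simp: strict_mono_on_def)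
    thus "0 \<le> (F t - F c) / (t - c)" using t by simp
  qed
  from tendsto_lowerbound[OF lim this nb1[OF True]] show ?thesis .
next
  case False
  hence c1: "c = 1" using c by auto
  have "(F has_real_derivative D) (at c within {0<..<1})"
    by (rule DERIV_subset[OF der]) (use c in auto)
  hence lim: "((\<lambda>t. (F t - F c) / (t - c)) \<longlongrightarrow> D) (at (1::real) within {0<..<1})"
    by (simp add: has_field_derivative_iff c1)
  have "eventually (\<lambda>t. 0 \<le> (F t - F c) / (t - c)) (at (1::real) within {0<..<1})"
    using ev_in
  proof (rule eventually_mono)
    fix t :: real assume t: "t \<in> {0<..<1}"
    have "F t < F c" using mono c1 t by (auto simp: strict_mono_on_def)
    thus "0 \<le> (F t - F c) / (t - c)" using t c1 by (simp add: divide_nonpos_neg)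
  qed
  from tendsto_lowerbound[OF lim this nb2] show ?thesis by simp
qed

lemma mvt0:
  fixes \<phi> \<phi>' :: "real \<Rightarrow> real"
  assumes der: "\<And>t. t \<ge> 0 \<Longrightarrow> (\<phi> has_real_derivative \<phi>' t) (at t within {0..})"
    and st: "0 \<le> s" "s < t"
  shows "\<exists>\<xi>. s < \<xi> \<and> \<xi> < t \<and> \<phi> t - \<phi> s = (t - s) * \<phi>' \<xi>"
proof -
  have cont: "continuous_on {s..t} \<phi>"
    unfolding continuous_on_eq_continuous_within
  proof
    fix r assume r: "r \<in> {s..t}"
    have "continuous (at r within {0..}) \<phi>" using der[of r] r st by (intro DERIV_continuous) auto
    thus "continuous (at r within {s..t}) \<phi>" by (rule continuous_within_subset) (use st in auto)
  qed
  have dat: "DERIV \<phi> r :> \<phi>' r" if "r > 0" for r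
  proof -
    have "at r within {0..} = at r" using that by (intro at_within_interior) auto
    thus ?thesis using der[of r] that by simp
  qed
  have "\<exists>l \<xi>. s < \<xi> \<and> \<xi> < t \<and> DERIV \<phi> \<xi> :> l \<and> \<phi> t - \<phi> s = (t - s) * l"
  proof (rule MVT[OF st(2) cont])
    fix r assume r: "s < r" "r < t"
    have "DERIV \<phi> r :> \<phi>' r" using dat r st by simp
    thus "\<phi> differentiable (at r)" unfolding real_differentiable_def by blast
  qed
  then obtain l \<xi> where *: "s < \<xi>" "\<xi> < t" "DERIV \<phi> \<xi> :> l" "\<phi> t - \<phi> s = (t - s) * l"
    by blast
  have "l = \<phi>' \<xi>" using DERIV_unique[OF *(3) dat] * st by simp
  thus ?thesis using * by blast
qed

lemma dini_gronwall:
  fixes v :: "real \<Rightarrow> real"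
  assumes cd: "c < d" and cont: "continuous_on {c..d} v" and vc: "v c \<le> 0" and M: "M \<ge> 0"
    and dini: "\<And>\<tau> \<epsilon>. \<tau> \<in> {c..<d} \<Longrightarrow> v \<tau> > 0 \<Longrightarrow> \<epsilon> > 0 \<Longrightarrow>
       eventually (\<lambda>t. v t - v \<tau> \<le> (t - \<tau>) * (M * v \<tau> + \<epsilon>)) (at_right \<tau>)"
  shows "v d \<le> 0"
proof (rule ccontr)
  assume "\<not> v d \<le> 0" hence vd: "v d > 0" by simp
  define L where "L = M + 1"
  define E where "E t = exp (L * (t - c))" for t
  have Epos: "E t > 0" for t by (simp add: E_def)
  define \<eta> where "\<eta> = v d / (2 * E d)"
  have eta: "\<eta> > 0" using vd Epos[of d] by (simp add: \<eta>_def)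
  define \<phi> where "\<phi> t = v t - \<eta> * E t" for t
  have "\<eta> * E d = v d / 2" using Epos[of d] by (simp add: \<eta>_def)
  hence phid: "\<phi> d > 0" using vd by (simp add: \<phi>_def)
  have phic: "\<phi> c < 0" using vc eta by (simp add: \<phi>_def E_def)
  have contphi: "continuous_on {c..d} \<phi>" unfolding \<phi>_def E_def by (intro continuous_intros cont)
  define A where "A = {c..d} \<inter> \<phi> -` {..0}"
  have "closed A" unfolding A_def by (rule continuous_closed_preimage[OF contphi]) auto
  moreover have "bounded A" unfolding A_def by (rule bounded_subset[OF bounded_closed_interval]) auto
  ultimately have "compact A" by (simp add: compact_eq_bounded_closed)
  moreover have "c \<in> A" using cd phic by (simp add: A_def)
  ultimately obtain s where sA: "s \<in> A" and smax: "\<forall>t\<in>A. t \<le> s"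
    using compact_attains_sup by blast
  have sd: "s < d" using sA phid by (auto simp: A_def order.order_iff_strict)
  have cs: "c \<le> s" and phis: "\<phi> s \<le> 0" using sA by (auto simp: A_def)
  let ?F = "at s within {s<..<d}"
  have Fnb: "?F \<noteq> bot" using nb1[OF sd] .
  have key: "eventually (\<lambda>t. \<phi> t < 0) ?F"
  proof (cases "\<phi> s < 0")
    case True
    have "continuous (at s within {c..d}) \<phi>" using contphi cs sd
      by (simp add: continuous_on_eq_continuous_within)
    hence "(\<phi> \<longlongrightarrow> \<phi> s) (at s within {c..d})" by (simp add: continuous_within)
    hence "(\<phi> \<longlongrightarrow> \<phi> s) ?F" by (rule tendsto_within_subset) (use cs in auto)
    from order_tendstoD(2)[OF this True] show ?thesis .
  next
    case False
    hence ps: "\<phi> s = 0" using phis by simp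
    define a where "a = \<eta> * E s"
    have apos: "a > 0" using eta Epos[of s] by (simp add: a_def)
    have vs: "v s = a" using ps by (simp add: \<phi>_def a_def)
    have "eventually (\<lambda>t. v t - v s \<le> (t - s) * (M * v s + a / 2)) (at_right s)"
      using dini[of s "a/2"] cs sd vs apos by simp
    hence "eventually (\<lambda>t. v t - v s \<le> (t - s) * (M * v s + a / 2)) ?F"
      by (rule filter_leD[rotated]) (rule at_le, auto)
    thus ?thesis using ev_in
    proof (rule eventually_elim2)
      fix t assume h: "v t - v s \<le> (t - s) * (M * v s + a / 2)" and t: "t \<in> {s<..<d}"
      define \<delta> where "\<delta> = t - s"
      have dpos: "\<delta> > 0" using t by (simp add: \<delta>_def)
      have "E t = E s * exp (L * \<delta>)" by (simp add: E_def \<delta>_def exp_add[symmetric] algebra_simps)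
      moreover have "exp (L * \<delta>) \<ge> 1 + L * \<delta>" by simp
      ultimately have "E t \<ge> E s * (1 + L * \<delta>)" using Epos[of s] by simp
      hence "\<eta> * E t \<ge> \<eta> * (E s * (1 + L * \<delta>))" using eta by simp
      moreover have "\<eta> * (E s * (1 + L * \<delta>)) = a + \<delta> * M * a + \<delta> * a"
        by (simp add: a_def L_def algebra_simps)
      moreover have "(t - s) * (M * v s + a / 2) = \<delta> * M * a + \<delta> * a / 2"
        by (simp add: vs \<delta>_def algebra_simps)
      moreover have "\<delta> * a > 0" using dpos apos by simp
      ultimately show "\<phi> t < 0" using h vs by (simp add: \<phi>_def)
    qed
  qed
  have "eventually (\<lambda>t. t \<in> {s<..<d} \<and> \<phi> t < 0) ?F"
    using ev_in key by (rule eventually_conj)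
  then obtain t where t: "t \<in> {s<..<d}" "\<phi> t < 0" using eventually_happens'[OF Fnb] by blast
  hence "t \<in> A" using cs by (auto simp: A_def)
  with smax t show False by auto
qed

lemma chain01:
  fixes \<phi> H H' :: "real \<Rightarrow> real"
  assumes dphi: "(\<phi> has_real_derivative D) (at t within {0..})" and rng: "\<forall>s\<ge>0. \<phi> s \<in> {0..1}"
    and t: "t \<ge> 0"
    and dH: "\<forall>r\<in>{0..1}. (H has_real_derivative H' r) (at r within {0..1})"
  shows "((\<lambda>s. H (\<phi> s)) has_real_derivative H' (\<phi> t) * D) (at t within {0..})"
proof -
  have "\<phi> t \<in> {0..1}" using rng t by blast
  hence "(H has_real_derivative H' (\<phi> t)) (at (\<phi> t) within {0..1})" using dH by (rule bspec[rotated])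
  moreover have "\<phi> ` {0..} \<subseteq> {0..1}"
  proof (rule image_subsetI)
    fix s assume "s \<in> {0::real..}"
    hence "s \<ge> 0" by simp
    thus "\<phi> s \<in> {0..1}" using rng by blast
  qed
  ultimately have "(H has_real_derivative H' (\<phi> t)) (at (\<phi> t) within (\<phi> ` {0..}))"
    by (rule DERIV_subset)
  from DERIV_image_chain[OF this dphi] show ?thesis by (simp add: o_def)
qed

lemma bound_fam:
  fixes \<phi> :: "nat \<Rightarrow> real \<Rightarrow> real"
  assumes "\<forall>j<n. continuous_on {0..1} (\<phi> j)"
  shows "\<exists>B>0. \<forall>j<n. \<forall>s\<in>{0..1}. \<bar>\<phi> j s\<bar> \<le> B"
proof -
  have "bounded (\<Union>j\<in>{..<n}. \<phi> j ` {0..1})"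
  proof (rule bounded_UN)
    show "finite {..<n}" by simp
    show "\<forall>j\<in>{..<n}. bounded (\<phi> j ` {0..1})"
    proof
      fix j assume "j \<in> {..<n}"
      hence "continuous_on {0..1} (\<phi> j)" using assms by simp
      hence "compact (\<phi> j ` {0..1})" by (rule compact_continuous_image) simp
      thus "bounded (\<phi> j ` {0..1})" by (rule compact_imp_bounded)
    qed
  qed
  hence "\<exists>a. \<forall>v\<in>(\<Union>j\<in>{..<n}. \<phi> j ` {0..1}). \<bar>v\<bar> \<le> a" by (simp add: bounded_real)
  then obtain a where a: "\<forall>v\<in>(\<Union>j\<in>{..<n}. \<phi> j ` {0..1}). \<bar>v\<bar> \<le> a" by blast
  show ?thesis
  proof (intro exI[of _ "\<bar>a\<bar> + 1"] conjI allI impI ballI)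
    show "\<bar>a\<bar> + 1 > 0" by simp
    fix j s assume "j < n" "s \<in> {0..1::real}"
    hence "\<phi> j s \<in> (\<Union>j\<in>{..<n}. \<phi> j ` {0..1})" by blast
    with a have "\<bar>\<phi> j s\<bar> \<le> a" by blast
    thus "\<bar>\<phi> j s\<bar> \<le> \<bar>a\<bar> + 1" by simp
  qed
qed

locale sir =
  fixes n :: nat and \<gamma> :: real
    and g f :: "nat \<Rightarrow> real \<Rightarrow> real"
    and x y :: "real \<Rightarrow> nat \<Rightarrow> real"
  assumes n_pos: "n \<ge> 1"
    and gamma_pos: "\<gamma> > 0"
    and g_C1: "\<forall>i<n. C1_on_unit (g i)"
    and f_C1: "\<forall>j<n. C1_on_unit (f j)"
    and g_pos: "\<forall>(u, v)\<in>S_set n. \<forall>i<n. g i (u i) > 0"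
    and f_pos: "\<forall>(u, v)\<in>S_set n. \<forall>j<n. f j (v j) > 0"
    and xg_incr: "\<forall>i<n. strict_mono_on {0..1} (\<lambda>s. s * g i s)"
    and fy_incr: "\<forall>j<n. strict_mono_on {0..1} (\<lambda>s. f j s * s)"
    and fy_concave: "\<forall>j<n. concave_on {0..1} (\<lambda>s. f j s * s)"
    and sol_in_S: "\<forall>t\<ge>0. (x t, y t) \<in> S_set n"
    and ode_x: "\<forall>t\<ge>0. \<forall>i<n. ((\<lambda>s. x s i) has_real_derivative
                 (- x t i * g i (x t i) * ybar n f (y t))) (at t within {0..})"
    and ode_y: "\<forall>t\<ge>0. \<forall>i<n. ((\<lambda>s. y s i) has_real_derivative
                 (x t i * g i (x t i) * ybar n f (y t) - \<gamma> * y t i)) (at t within {0..})"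
    and x0_lneq: "(\<forall>i<n. 0 \<le> x 0 i) \<and> (\<exists>i<n. 0 < x 0 i)"
    and y0_lneq: "(\<forall>i<n. 1 - y 0 i \<le> 1) \<and> (\<exists>i<n. 1 - y 0 i < 1)"
begin

definition "fd j = (SOME h. continuous_on {0..1} h \<and> (\<forall>s\<in>{0..1}. (f j has_real_derivative h s) (at s within {0..1})))"
definition "gd j = (SOME h. continuous_on {0..1} h \<and> (\<forall>s\<in>{0..1}. (g j has_real_derivative h s) (at s within {0..1})))"
definition "F j s = f j s * s"
definition "Fd j s = fd j s * s + f j s"
definition "G j s = s * g j s"
definition "Gd j s = g j s + s * gd j s"
definition "Z t = ybar n f (y t)"
definition "Hh j t = G j (x t j)"
definition "U j t = Hh j t * Z t - \<gamma> * y t j"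
definition "P j t = Fd j (y t j)"
definition "W t = (\<Sum>j<n. P j t * U j t)"
definition "Hd j t = Gd j (x t j) * (- Hh j t * Z t)"
definition "Ud j t = Hd j t * Z t + Hh j t * W t - \<gamma> * U j t"
definition "K t = (\<Sum>j<n. P j t * Ud j t)"

lemma fd_prop: assumes "j < n"
  shows "continuous_on {0..1} (fd j) \<and> (\<forall>s\<in>{0..1}. (f j has_real_derivative fd j s) (at s within {0..1}))"
proof -
  have "\<exists>h. continuous_on {0..1} h \<and> (\<forall>s\<in>{0..1}. (f j has_real_derivative h s) (at s within {0..1}))"
    using f_C1 assms unfolding C1_on_unit_def by blast
  thus ?thesis unfolding fd_def by (rule someI_ex)
qed

lemma gd_prop: assumes "j < n"
  shows "continuous_on {0..1} (gd j) \<and> (\<forall>s\<in>{0..1}. (g j has_real_derivative gd j s) (at s within {0..1}))"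
proof -
  have "\<exists>h. continuous_on {0..1} h \<and> (\<forall>s\<in>{0..1}. (g j has_real_derivative h s) (at s within {0..1}))"
    using g_C1 assms unfolding C1_on_unit_def by blast
  thus ?thesis unfolding gd_def by (rule someI_ex)
qed

lemma f_cont: "j < n \<Longrightarrow> continuous_on {0..1} (f j)"
  using fd_prop by (intro DERIV_continuous_on) blast
lemma g_cont: "j < n \<Longrightarrow> continuous_on {0..1} (g j)"
  using gd_prop by (intro DERIV_continuous_on) blast

lemma F_der: assumes "j < n" "s \<in> {0..1}"
  shows "(F j has_real_derivative Fd j s) (at s within {0..1})"
proof -
  have "(f j has_real_derivative fd j s) (at s within {0..1})" using fd_prop assms by blast
  from DERIV_mult[OF this DERIV_ident] show ?thesis
    unfolding F_def[abs_def] Fd_def by simp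
qed

lemma G_der: assumes "j < n" "s \<in> {0..1}"
  shows "(G j has_real_derivative Gd j s) (at s within {0..1})"
proof -
  have "(g j has_real_derivative gd j s) (at s within {0..1})" using gd_prop assms by blast
  from DERIV_mult[OF DERIV_ident this] show ?thesis
    unfolding G_def[abs_def] Gd_def by (simp add: mult.commute)
qed

lemma Fd_cont: "j < n \<Longrightarrow> continuous_on {0..1} (Fd j)"
  unfolding Fd_def[abs_def] using fd_prop f_cont by (intro continuous_intros) auto

lemma F_conc: "j < n \<Longrightarrow> concave_on {0..1} (F j)"
  using fy_concave unfolding F_def[abs_def] by blast
lemma F_mono: "j < n \<Longrightarrow> strict_mono_on {0..1} (F j)"
  using fy_incr unfolding F_def[abs_def] by blast
lemma G_mono: "j < n \<Longrightarrow> strict_mono_on {0..1} (G j)"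
  using xg_incr unfolding G_def[abs_def] by blast

lemma Fd_nonneg: "j < n \<Longrightarrow> s \<in> {0..1} \<Longrightarrow> 0 \<le> Fd j s"
  by (rule deriv_nonneg_mono[OF F_mono F_der])
lemma Gd_nonneg: "j < n \<Longrightarrow> s \<in> {0..1} \<Longrightarrow> 0 \<le> Gd j s"
  by (rule deriv_nonneg_mono[OF G_mono G_der])

lemma Fd_pos: assumes j: "j < n" and s: "0 \<le> s" "s < 1" shows "0 < Fd j s"
proof -
  have "F j 1 - F j s \<le> Fd j s * (1 - s)"
    by (rule concave_tangent[OF F_conc[OF j] F_der[OF j]]) (use s in auto)
  moreover have "F j s < F j 1" using F_mono[OF j] s by (auto simp: strict_mono_on_def)
  ultimately have "0 < Fd j s * (1 - s)" by linarith
  thus ?thesis using s by (simp add: zero_less_mult_iff)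
qed

lemma Fd_anti: assumes j: "j < n" and a: "a \<in> {0..1}" and b: "b \<in> {0..1}"
  shows "(Fd j a - Fd j b) * (a - b) \<le> 0"
proof -
  have 1: "F j b - F j a \<le> Fd j a * (b - a)"
    by (rule concave_tangent[OF F_conc[OF j] F_der[OF j a] a b])
  have 2: "F j a - F j b \<le> Fd j b * (a - b)"
    by (rule concave_tangent[OF F_conc[OF j] F_der[OF j b] b a])
  have "(Fd j a - Fd j b) * (a - b) = - (Fd j a * (b - a) + Fd j b * (a - b))"
    by (simp add: algebra_simps)
  thus ?thesis using 1 2 by linarith
qed

lemma f_pos': assumes "j < n" "s \<in> {0..1}" shows "f j s > 0"
proof -
  have "((\<lambda>_. 0), (\<lambda>_. s)) \<in> S_set n" using assms by (simp add: S_set_def)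
  thus ?thesis using f_pos assms(1) by fastforce
qed

lemma g_pos': assumes "j < n" "s \<in> {0..1}" shows "g j s > 0"
proof -
  have "((\<lambda>_. s), (\<lambda>_. 0)) \<in> S_set n" using assms by (simp add: S_set_def)
  thus ?thesis using g_pos assms(1) by fastforce
qed

lemma rng: assumes "t \<ge> 0" "j < n"
  shows "0 \<le> x t j" "x t j \<le> 1" "0 \<le> y t j" "y t j \<le> 1" "x t j + y t j \<le> 1"
  using sol_in_S assms unfolding S_set_def by auto

lemma xr: "\<forall>s\<ge>0. x s j \<in> {0..1}" if "j < n" using rng[OF _ that] by auto
lemma yr: "\<forall>s\<ge>0. y s j \<in> {0..1}" if "j < n" using rng[OF _ that] by auto

end

context sir begin

lemma Z_eq: "Z t = (\<Sum>j<n. F j (y t j))"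
  by (simp add: Z_def ybar_def F_def)

lemma dx: assumes "t \<ge> 0" "j < n"
  shows "((\<lambda>s. x s j) has_real_derivative (- Hh j t * Z t)) (at t within {0..})"
proof -
  have "- x t j * g j (x t j) * ybar n f (y t) = - Hh j t * Z t"
    by (simp add: Hh_def G_def Z_def)
  thus ?thesis using ode_x assms by metis
qed

lemma dy: assumes "t \<ge> 0" "j < n"
  shows "((\<lambda>s. y s j) has_real_derivative U j t) (at t within {0..})"
proof -
  have "x t j * g j (x t j) * ybar n f (y t) - \<gamma> * y t j = U j t"
    by (simp add: U_def Hh_def G_def Z_def)
  thus ?thesis using ode_y assms by metis
qed

lemma dZ: assumes t: "t \<ge> 0"
  shows "(Z has_real_derivative W t) (at t within {0..})"
proof -
  have "((\<lambda>s. \<Sum>j<n. F j (y s j)) has_real_derivative (\<Sum>j<n. Fd j (y t j) * U j t)) (at t within {0..})"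
  proof (rule DERIV_sum)
    fix j assume "j \<in> {..<n}"
    hence j: "j < n" by simp
    show "((\<lambda>s. F j (y s j)) has_real_derivative Fd j (y t j) * U j t) (at t within {0..})"
      by (rule chain01[OF dy[OF t j] yr[OF j] t]) (use F_der[OF j] in blast)
  qed
  thus ?thesis unfolding W_def P_def Z_eq[abs_def] .
qed

lemma dHh: assumes t: "t \<ge> 0" and j: "j < n"
  shows "((\<lambda>s. Hh j s) has_real_derivative Hd j t) (at t within {0..})"
proof -
  have "((\<lambda>s. G j (x s j)) has_real_derivative Hd j t) (at t within {0..})"
    unfolding Hd_def
    by (rule chain01[OF dx[OF t j] xr[OF j] t]) (use G_der[OF j] in blast)
  thus ?thesis unfolding Hh_def[abs_def] .
qed

lemma dU: assumes t: "t \<ge> 0" and j: "j < n"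
  shows "((\<lambda>s. U j s) has_real_derivative Ud j t) (at t within {0..})"
proof -
  have "((\<lambda>s. Hh j s * Z s - \<gamma> * y s j) has_real_derivative
        Hd j t * Z t + W t * Hh j t - \<gamma> * U j t) (at t within {0..})"
    by (intro DERIV_diff DERIV_mult DERIV_cmult dHh[OF t j] dZ[OF t] dy[OF t j])
  thus ?thesis unfolding U_def[abs_def] Ud_def by (simp add: mult.commute)
qed

lemma cont_y: "j < n \<Longrightarrow> continuous_on {0..} (\<lambda>s. y s j)"
  by (rule DERIV_continuous_on[OF dy]) auto
lemma cont_x: "j < n \<Longrightarrow> continuous_on {0..} (\<lambda>s. x s j)"
  by (rule DERIV_continuous_on[OF dx]) auto
lemma cont_Z: "continuous_on {0..} Z"
  by (rule DERIV_continuous_on[OF dZ]) auto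
lemma cont_U: "j < n \<Longrightarrow> continuous_on {0..} (U j)"
  using DERIV_continuous_on[OF dU] by auto
lemma cont_Hh: "j < n \<Longrightarrow> continuous_on {0..} (Hh j)"
  using DERIV_continuous_on[OF dHh] by auto

lemma cont_P: assumes j: "j < n" shows "continuous_on {0..} (P j)"
proof -
  have "(\<lambda>s. y s j) ` {0..} \<subseteq> {0..1}"
  proof (rule image_subsetI)
    fix s assume "s \<in> {0::real..}"
    hence "s \<ge> 0" by simp
    thus "y s j \<in> {0..1}" using yr[OF j] by blast
  qed
  from continuous_on_compose2[OF Fd_cont[OF j] cont_y[OF j] this]
  show ?thesis unfolding P_def[abs_def] .
qed

lemma cont_W: "continuous_on {0..} W"
  unfolding W_def[abs_def] by (intro continuous_on_sum continuous_on_mult cont_P cont_U) auto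

end

context sir begin

lemma F_nonneg: "j < n \<Longrightarrow> s \<in> {0..1} \<Longrightarrow> 0 \<le> F j s"
  using f_pos'[of j s] by (simp add: F_def)
lemma Z_nonneg: assumes "t \<ge> 0" shows "0 \<le> Z t"
  unfolding Z_eq by (rule sum_nonneg) (use F_nonneg rng[OF assms] in auto)
lemma Hh_nonneg: assumes "t \<ge> 0" "j < n" shows "0 \<le> Hh j t"
proof -
  have "0 < g j (x t j)" using g_pos'[OF assms(2), of "x t j"] rng[OF assms] by simp
  thus ?thesis unfolding Hh_def G_def by (intro mult_nonneg_nonneg) (use rng[OF assms] in auto)
qed
lemma P_nonneg: assumes "t \<ge> 0" "j < n" shows "0 \<le> P j t"
  using Fd_nonneg[OF assms(2), of "y t j"] rng[OF assms] by (simp add: P_def)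
lemma Hd_nonpos: assumes "t \<ge> 0" "j < n" shows "Hd j t \<le> 0"
proof -
  have "0 \<le> Gd j (x t j)" using Gd_nonneg[OF assms(2), of "x t j"] rng[OF assms] by simp
  moreover have "- Hh j t * Z t \<le> 0" using Hh_nonneg[OF assms] Z_nonneg[OF assms(1)] by simp
  ultimately show ?thesis unfolding Hd_def by (rule mult_nonneg_nonpos)
qed

lemma Z_pos: assumes t: "t \<ge> 0" shows "0 < Z t"
proof -
  obtain k where k: "k < n" "y 0 k > 0" using y0_lneq by auto
  define \<psi>' where "\<psi>' s = exp (\<gamma> * s) * (Hh k s * Z s)" for s
  have der: "((\<lambda>s. y s k * exp (\<gamma> * s)) has_real_derivative \<psi>' s) (at s within {0..})" if s: "s \<ge> 0" for s
  proof -
    have "((\<lambda>s. exp (\<gamma> * s)) has_real_derivative exp (\<gamma> * s) * \<gamma>) (at s within {0..})"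
      by (auto intro!: derivative_eq_intros)
    from DERIV_mult[OF dy[OF s k(1)] this] show ?thesis
      by (simp add: \<psi>'_def U_def algebra_simps)
  qed
  have yk: "y t k > 0"
  proof (cases "t = 0")
    case True thus ?thesis using k by simp
  next
    case False
    hence "0 < t" using t by simp
    from mvt0[OF der order.refl this] obtain \<xi> where xi: "0 < \<xi>" "\<xi> < t"
      "y t k * exp (\<gamma> * t) - y 0 k * exp (\<gamma> * 0) = (t - 0) * \<psi>' \<xi>" by blast
    have "\<psi>' \<xi> \<ge> 0" unfolding \<psi>'_def
      using Hh_nonneg[of \<xi> k] Z_nonneg[of \<xi>] xi k by simp
    hence "t * \<psi>' \<xi> \<ge> 0" using t by simp
    hence "y t k * exp (\<gamma> * t) \<ge> y 0 k" using xi by simp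
    hence "y t k * exp (\<gamma> * t) > 0" using k by linarith
    thus ?thesis by (simp add: zero_less_mult_iff)
  qed
  have "f k (y t k) > 0" using f_pos'[OF k(1), of "y t k"] rng[OF t k(1)] by simp
  hence "F k (y t k) > 0" using yk by (simp add: F_def)
  also have "F k (y t k) \<le> (\<Sum>j<n. F j (y t j))"
    by (rule member_le_sum) (use k F_nonneg rng[OF t] in auto)
  finally show ?thesis unfolding Z_eq .
qed

lemma bound_f: obtains Bf where "Bf > 0" "\<forall>j<n. \<forall>s\<in>{0..1}. f j s \<le> Bf"
proof -
  obtain B where "B > 0" "\<forall>j<n. \<forall>s\<in>{0..1}. \<bar>f j s\<bar> \<le> B" using bound_fam[of n f] f_cont by blast
  thus ?thesis using that by fastforce
qed
lemma bound_g: obtains Bg where "Bg > 0" "\<forall>j<n. \<forall>s\<in>{0..1}. g j s \<le> Bg"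
proof -
  obtain B where "B > 0" "\<forall>j<n. \<forall>s\<in>{0..1}. \<bar>g j s\<bar> \<le> B" using bound_fam[of n g] g_cont by blast
  thus ?thesis using that by fastforce
qed

lemma Z_bound: assumes "Bf > 0" "\<forall>j<n. \<forall>s\<in>{0..1}. f j s \<le> Bf" "t \<ge> 0"
  shows "Z t \<le> Bf * (\<Sum>j<n. y t j)"
proof -
  have "Z t = (\<Sum>j<n. f j (y t j) * y t j)" by (simp add: Z_def ybar_def)
  also have "\<dots> \<le> (\<Sum>j<n. Bf * y t j)"
  proof (rule sum_mono)
    fix j assume "j \<in> {..<n}"
    hence j: "j < n" by simp
    show "f j (y t j) * y t j \<le> Bf * y t j"
      using assms(2) j rng[OF assms(3) j] by (intro mult_right_mono) auto
  qed
  finally show ?thesis by (simp add: sum_distrib_left)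
qed

lemma x_pos: assumes i: "i < n" "x 0 i > 0" and t: "t \<ge> 0" shows "x t i > 0"
proof -
  obtain Bf where Bf: "Bf > 0" "\<forall>j<n. \<forall>s\<in>{0..1}. f j s \<le> Bf" by (rule bound_f)
  obtain Bg where Bg: "Bg > 0" "\<forall>j<n. \<forall>s\<in>{0..1}. g j s \<le> Bg" by (rule bound_g)
  define C where "C = Bg * (Bf * n)"
  have Zle: "Z s \<le> Bf * n" if "s \<ge> 0" for s
  proof -
    have "Z s \<le> Bf * (\<Sum>j<n. y s j)" by (rule Z_bound[OF Bf that])
    also have "(\<Sum>j<n. y s j) \<le> (\<Sum>j<n. 1)" by (rule sum_mono) (use rng[OF that] in auto)
    finally show ?thesis using Bf by (simp add: mult_left_mono)
  qed
  define \<psi>' where "\<psi>' s = exp (C * s) * (x s i * (C - g i (x s i) * Z s))" for s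
  have der: "((\<lambda>s. x s i * exp (C * s)) has_real_derivative \<psi>' s) (at s within {0..})" if s: "s \<ge> 0" for s
  proof -
    have "((\<lambda>s. exp (C * s)) has_real_derivative exp (C * s) * C) (at s within {0..})"
      by (auto intro!: derivative_eq_intros)
    from DERIV_mult[OF dx[OF s i(1)] this] show ?thesis
      by (simp add: \<psi>'_def Hh_def G_def algebra_simps)
  qed
  show ?thesis
  proof (cases "t = 0")
    case True thus ?thesis using i by simp
  next
    case False
    hence "0 < t" using t by simp
    from mvt0[OF der order.refl this] obtain \<xi> where xi: "0 < \<xi>" "\<xi> < t"
      "x t i * exp (C * t) - x 0 i * exp (C * 0) = (t - 0) * \<psi>' \<xi>" by blast
    have "g i (x \<xi> i) * Z \<xi> \<le> C" unfolding C_def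
      using Bg(2) i rng[of \<xi> i] xi Zle[of \<xi>] Z_nonneg[of \<xi>] Bg(1)
      by (intro mult_mono) auto
    hence "\<psi>' \<xi> \<ge> 0" unfolding \<psi>'_def using rng[of \<xi> i] xi i by simp
    hence "t * \<psi>' \<xi> \<ge> 0" using t by simp
    hence "x t i * exp (C * t) \<ge> x 0 i" using xi by simp
    hence "x t i * exp (C * t) > 0" using i by linarith
    thus ?thesis by (simp add: zero_less_mult_iff)
  qed
qed

end

context sir begin

lemma sub0: "\<tau> \<ge> 0 \<Longrightarrow> {\<tau><..} \<subseteq> {0::real..}" by auto

lemma dUq: assumes \<tau>: "\<tau> \<ge> 0" and j: "j < n"
  shows "((\<lambda>t. (U j t - U j \<tau>) / (t - \<tau>)) \<longlongrightarrow> Ud j \<tau>) (at_right \<tau>)"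
  using DERIV_subset[OF dU[OF \<tau> j] sub0[OF \<tau>]] by (simp add: has_field_derivative_iff)

lemma dyq: assumes \<tau>: "\<tau> \<ge> 0" and j: "j < n"
  shows "((\<lambda>t. (y t j - y \<tau> j) / (t - \<tau>)) \<longlongrightarrow> U j \<tau>) (at_right \<tau>)"
  using DERIV_subset[OF dy[OF \<tau> j] sub0[OF \<tau>]] by (simp add: has_field_derivative_iff)

lemma Ulim: assumes \<tau>: "\<tau> \<ge> 0" and j: "j < n"
  shows "(U j \<longlongrightarrow> U j \<tau>) (at_right \<tau>)"
proof -
  have "continuous (at \<tau> within {\<tau><..}) (U j)"
    using DERIV_continuous[OF DERIV_subset[OF dU[OF \<tau> j] sub0[OF \<tau>]]] .
  thus ?thesis by (simp add: continuous_within)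
qed

lemma Plim: assumes \<tau>: "\<tau> \<ge> 0" and j: "j < n"
  shows "(P j \<longlongrightarrow> P j \<tau>) (at_right \<tau>)"
proof -
  have "continuous (at \<tau> within {0..}) (P j)"
    using cont_P[OF j] \<tau> by (simp add: continuous_on_eq_continuous_within)
  hence "(P j \<longlongrightarrow> P j \<tau>) (at \<tau> within {0..})" by (simp add: continuous_within)
  thus ?thesis by (rule tendsto_within_subset) (rule sub0[OF \<tau>])
qed

lemma dplus_j: assumes \<tau>: "\<tau> \<ge> 0" and j: "j < n" and \<delta>: "\<delta> > 0"
  shows "eventually (\<lambda>t. (P j t - P j \<tau>) * U j t \<le> \<delta> * (t - \<tau>)) (at_right \<tau>)"
proof -
  have gt: "eventually (\<lambda>t. \<tau> < t) (at_right \<tau>)" by (rule eventually_at_right_less)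
  consider "U j \<tau> > 0" | "U j \<tau> < 0" | "U j \<tau> = 0" by linarith
  then show ?thesis
  proof cases
    case 1
    have e1: "eventually (\<lambda>t. U j t > 0) (at_right \<tau>)" using order_tendstoD(1)[OF Ulim[OF \<tau> j] 1] .
    have e2: "eventually (\<lambda>t. (y t j - y \<tau> j) / (t - \<tau>) > 0) (at_right \<tau>)"
      using order_tendstoD(1)[OF dyq[OF \<tau> j] 1] .
    show ?thesis using e1 e2 gt
    proof eventually_elim
      fix t assume u: "U j t > 0" and q: "(y t j - y \<tau> j) / (t - \<tau>) > 0" and tt: "\<tau> < t"
      have yt: "y t j - y \<tau> j > 0" using q tt by (simp add: zero_less_divide_iff)
      have "(P j t - P j \<tau>) * (y t j - y \<tau> j) \<le> 0" unfolding P_def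
        using Fd_anti[OF j, of "y t j" "y \<tau> j"] rng[OF _ j, of t] rng[OF \<tau> j] tt \<tau> by auto
      hence "P j t - P j \<tau> \<le> 0" using yt by (simp add: mult_le_0_iff)
      hence "(P j t - P j \<tau>) * U j t \<le> 0" using u by (simp add: mult_le_0_iff)
      also have "0 \<le> \<delta> * (t - \<tau>)" using \<delta> tt by simp
      finally show "(P j t - P j \<tau>) * U j t \<le> \<delta> * (t - \<tau>)" .
    qed
  next
    case 2
    have e1: "eventually (\<lambda>t. U j t < 0) (at_right \<tau>)" using order_tendstoD(2)[OF Ulim[OF \<tau> j] 2] .
    have e2: "eventually (\<lambda>t. (y t j - y \<tau> j) / (t - \<tau>) < 0) (at_right \<tau>)"
      using order_tendstoD(2)[OF dyq[OF \<tau> j] 2] .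
    show ?thesis using e1 e2 gt
    proof eventually_elim
      fix t assume u: "U j t < 0" and q: "(y t j - y \<tau> j) / (t - \<tau>) < 0" and tt: "\<tau> < t"
      have yt: "y t j - y \<tau> j < 0" using q tt by (simp add: divide_less_0_iff)
      have "(P j t - P j \<tau>) * (y t j - y \<tau> j) \<le> 0" unfolding P_def
        using Fd_anti[OF j, of "y t j" "y \<tau> j"] rng[OF _ j, of t] rng[OF \<tau> j] tt \<tau> by auto
      hence "P j t - P j \<tau> \<ge> 0" using yt by (simp add: mult_le_0_iff)
      hence "(P j t - P j \<tau>) * U j t \<le> 0" using u by (simp add: mult_le_0_iff)
      also have "0 \<le> \<delta> * (t - \<tau>)" using \<delta> tt by simp
      finally show "(P j t - P j \<tau>) * U j t \<le> \<delta> * (t - \<tau>)" .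
    qed
  next
    case 3
    have "((\<lambda>t. (P j t - P j \<tau>) * ((U j t - U j \<tau>) / (t - \<tau>))) \<longlongrightarrow> (P j \<tau> - P j \<tau>) * Ud j \<tau>) (at_right \<tau>)"
      by (intro tendsto_intros Plim[OF \<tau> j] dUq[OF \<tau> j])
    hence "((\<lambda>t. (P j t - P j \<tau>) * ((U j t - U j \<tau>) / (t - \<tau>))) \<longlongrightarrow> 0) (at_right \<tau>)" by simp
    from order_tendstoD(2)[OF this \<delta>]
    have e: "eventually (\<lambda>t. (P j t - P j \<tau>) * ((U j t - U j \<tau>) / (t - \<tau>)) < \<delta>) (at_right \<tau>)" .
    show ?thesis using e gt
    proof eventually_elim
      fix t assume q: "(P j t - P j \<tau>) * ((U j t - U j \<tau>) / (t - \<tau>)) < \<delta>" and tt: "\<tau> < t"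
      have "(P j t - P j \<tau>) * U j t = (t - \<tau>) * ((P j t - P j \<tau>) * ((U j t - U j \<tau>) / (t - \<tau>)))"
        using 3 tt by simp
      also have "\<dots> \<le> (t - \<tau>) * \<delta>" using q tt by (intro mult_left_mono) auto
      finally show "(P j t - P j \<tau>) * U j t \<le> \<delta> * (t - \<tau>)" by (simp add: mult.commute)
    qed
  qed
qed

lemma dplus: assumes \<tau>: "\<tau> \<ge> 0" and \<epsilon>: "\<epsilon> > 0"
  shows "eventually (\<lambda>t. W t - W \<tau> \<le> (t - \<tau>) * (K \<tau> + \<epsilon>)) (at_right \<tau>)"
proof -
  define \<delta> where "\<delta> = \<epsilon> / (2 * n)"
  have \<delta>pos: "\<delta> > 0" using n_pos \<epsilon> by (simp add: \<delta>_def)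
  have gt: "eventually (\<lambda>t. \<tau> < t) (at_right \<tau>)" by (rule eventually_at_right_less)
  have eJ: "eventually (\<lambda>t. \<forall>j\<in>{..<n}. (P j t - P j \<tau>) * U j t \<le> \<delta> * (t - \<tau>)) (at_right \<tau>)"
    by (rule eventually_ball_finite) (use dplus_j[OF \<tau> _ \<delta>pos] in auto)
  have lim: "((\<lambda>t. \<Sum>j<n. P j \<tau> * ((U j t - U j \<tau>) / (t - \<tau>))) \<longlongrightarrow> K \<tau>) (at_right \<tau>)"
    unfolding K_def by (intro tendsto_sum tendsto_mult_left dUq[OF \<tau>]) auto
  have eA: "eventually (\<lambda>t. (\<Sum>j<n. P j \<tau> * ((U j t - U j \<tau>) / (t - \<tau>))) < K \<tau> + \<epsilon> / 2) (at_right \<tau>)"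
    using order_tendstoD(2)[OF lim] \<epsilon> by simp
  show ?thesis using eJ eA gt
  proof eventually_elim
    fix t assume J: "\<forall>j\<in>{..<n}. (P j t - P j \<tau>) * U j t \<le> \<delta> * (t - \<tau>)"
      and A: "(\<Sum>j<n. P j \<tau> * ((U j t - U j \<tau>) / (t - \<tau>))) < K \<tau> + \<epsilon> / 2" and tt: "\<tau> < t"
    have split: "W t - W \<tau> = (\<Sum>j<n. P j \<tau> * (U j t - U j \<tau>)) + (\<Sum>j<n. (P j t - P j \<tau>) * U j t)"
      unfolding W_def sum_subtractf[symmetric] sum.distrib[symmetric]
      by (rule sum.cong) (auto simp: algebra_simps)
    have s1: "(\<Sum>j<n. P j \<tau> * (U j t - U j \<tau>)) = (t - \<tau>) * (\<Sum>j<n. P j \<tau> * ((U j t - U j \<tau>) / (t - \<tau>)))"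
      unfolding sum_distrib_left by (rule sum.cong) (use tt in auto)
    have s1': "(t - \<tau>) * (\<Sum>j<n. P j \<tau> * ((U j t - U j \<tau>) / (t - \<tau>))) \<le> (t - \<tau>) * (K \<tau> + \<epsilon> / 2)"
      using A tt by (intro mult_left_mono) auto
    have s2: "(\<Sum>j<n. (P j t - P j \<tau>) * U j t) \<le> (\<Sum>j<n. \<delta> * (t - \<tau>))"
      using J by (intro sum_mono) auto
    have s3: "(\<Sum>j<n. \<delta> * (t - \<tau>)) = (t - \<tau>) * (\<epsilon> / 2)"
      using n_pos by (simp add: \<delta>_def)
    have "W t - W \<tau> \<le> (t - \<tau>) * (K \<tau> + \<epsilon> / 2) + (t - \<tau>) * (\<epsilon> / 2)"
      using split s1 s1' s2 s3 by linarith
    also have "\<dots> = (t - \<tau>) * (K \<tau> + \<epsilon>)" by (simp add: algebra_simps)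
    finally show "W t - W \<tau> \<le> (t - \<tau>) * (K \<tau> + \<epsilon>)" .
  qed
qed

lemma K_eq: "K t = Z t * (\<Sum>j<n. P j t * Hd j t) + ((\<Sum>j<n. P j t * Hh j t) - \<gamma>) * W t"
proof -
  have "K t = (\<Sum>j<n. Z t * (P j t * Hd j t) + W t * (P j t * Hh j t) - \<gamma> * (P j t * U j t))"
    unfolding K_def Ud_def by (rule sum.cong) (auto simp: algebra_simps)
  also have "\<dots> = Z t * (\<Sum>j<n. P j t * Hd j t) + W t * (\<Sum>j<n. P j t * Hh j t) - \<gamma> * (\<Sum>j<n. P j t * U j t)"
    by (simp add: sum.distrib sum_subtractf sum_distrib_left)
  also have "(\<Sum>j<n. P j t * U j t) = W t" by (simp add: W_def)
  finally show ?thesis by (simp add: algebra_simps)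
qed

lemma PHd_nonpos: "t \<ge> 0 \<Longrightarrow> (\<Sum>j<n. P j t * Hd j t) \<le> 0"
  by (rule sum_nonpos) (use P_nonneg Hd_nonpos in \<open>auto intro: mult_nonneg_nonpos\<close>)

end

context sir begin

lemma W_nonpos_after: assumes t0: "t0 \<ge> 0" "W t0 \<le> 0" and t: "t0 \<le> t" shows "W t \<le> 0"
proof (cases "t = t0")
  case True thus ?thesis using t0 by simp
next
  case False
  hence lt: "t0 < t" using t by simp
  define a where "a s = (\<Sum>j<n. P j s * Hh j s) - \<gamma>" for s
  have sub: "{t0..t} \<subseteq> {0..}" using t0 by auto
  have ca: "continuous_on {t0..t} a" unfolding a_def
  proof (intro continuous_on_diff continuous_on_const continuous_on_sum ballI continuous_on_mult)
    fix j assume "j \<in> {..<n}"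
    hence j: "j < n" by simp
    show "continuous_on {t0..t} (P j)" by (rule continuous_on_subset[OF cont_P[OF j] sub])
    show "continuous_on {t0..t} (Hh j)" by (rule continuous_on_subset[OF cont_Hh[OF j] sub])
  qed
  have "compact (a ` {t0..t})" by (rule compact_continuous_image[OF ca]) simp
  hence "bounded (a ` {t0..t})" by (rule compact_imp_bounded)
  hence "\<exists>B. \<forall>v\<in>a ` {t0..t}. \<bar>v\<bar> \<le> B" unfolding bounded_real .
  then obtain B where B: "\<forall>v\<in>a ` {t0..t}. \<bar>v\<bar> \<le> B" by blast
  define M where "M = \<bar>B\<bar>"
  show ?thesis
  proof (rule dini_gronwall[OF lt])
    show "continuous_on {t0..t} W" by (rule continuous_on_subset[OF cont_W sub])
    show "W t0 \<le> 0" by (rule t0(2))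
    show "M \<ge> 0" by (simp add: M_def)
    fix \<tau> \<epsilon> :: real assume \<tau>: "\<tau> \<in> {t0..<t}" and Wp: "W \<tau> > 0" and \<epsilon>: "\<epsilon> > 0"
    have \<tau>0: "\<tau> \<ge> 0" using \<tau> t0 by simp
    have "a \<tau> \<in> a ` {t0..t}" using \<tau> by auto
    hence "\<bar>a \<tau>\<bar> \<le> B" using B by blast
    hence aM: "a \<tau> \<le> M" by (simp add: M_def)
    have K1: "Z \<tau> * (\<Sum>j<n. P j \<tau> * Hd j \<tau>) \<le> 0"
      by (rule mult_nonneg_nonpos[OF Z_nonneg[OF \<tau>0] PHd_nonpos[OF \<tau>0]])
    have K2: "a \<tau> * W \<tau> \<le> M * W \<tau>" using aM Wp by (intro mult_right_mono) auto
    have KM: "K \<tau> \<le> M * W \<tau>" using K_eq[of \<tau>] K1 K2 by (simp add: a_def)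
    show "eventually (\<lambda>s. W s - W \<tau> \<le> (s - \<tau>) * (M * W \<tau> + \<epsilon>)) (at_right \<tau>)"
      using dplus[OF \<tau>0 \<epsilon>] eventually_at_right_less[of \<tau>]
    proof eventually_elim
      fix s assume h: "W s - W \<tau> \<le> (s - \<tau>) * (K \<tau> + \<epsilon>)" and s: "\<tau> < s"
      have "(s - \<tau>) * (K \<tau> + \<epsilon>) \<le> (s - \<tau>) * (M * W \<tau> + \<epsilon>)" using KM s by (intro mult_left_mono) auto
      thus "W s - W \<tau> \<le> (s - \<tau>) * (M * W \<tau> + \<epsilon>)" using h by linarith
    qed
  qed
qed

lemma Z_mono_after: assumes t0: "t0 \<ge> 0" "W t0 \<le> 0" and st: "t0 \<le> s" "s \<le> t" shows "Z t \<le> Z s"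
proof (cases "s = t")
  case True thus ?thesis by simp
next
  case False
  hence lt: "s < t" using st by simp
  from mvt0[OF dZ _ lt] t0 st obtain \<xi> where xi: "s < \<xi>" "\<xi> < t" "Z t - Z s = (t - s) * W \<xi>" by auto
  have "W \<xi> \<le> 0" using W_nonpos_after[OF t0, of \<xi>] xi st by simp
  hence "(t - s) * W \<xi> \<le> 0" using lt by (intro mult_nonneg_nonpos) auto
  thus ?thesis using xi by simp
qed

lemma DERIV_at: assumes "r > 0" "((\<phi>::real\<Rightarrow>real) has_real_derivative D) (at r within {0..})"
  shows "DERIV \<phi> r :> D"
proof -
  have "at r within {0..} = at r" using assms(1) by (intro at_within_interior) auto
  thus ?thesis using assms(2) by simp
qed

lemma Z_strict_after: assumes t0: "t0 \<ge> 0" "W t0 \<le> 0" and st: "t0 \<le> s" "s < t" shows "Z t < Z s"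
proof (rule ccontr)
  assume "\<not> Z t < Z s"
  hence ge: "Z s \<le> Z t" by simp
  have s0: "s \<ge> 0" using t0 st by simp
  have const: "Z r = Z s" if "s \<le> r" "r \<le> t" for r
    using Z_mono_after[OF t0, of s r] Z_mono_after[OF t0, of r t] that st ge by simp
  obtain i where i: "i < n" "x 0 i > 0" using x0_lneq by auto
  have W0: "W r = 0" if r: "s < r" "r < t" for r
  proof -
    have r0: "r > 0" using r s0 by simp
    have dd: "DERIV Z r :> W r" by (rule DERIV_at[OF r0 dZ[OF less_imp_le[OF r0]]])
    have cc: "\<forall>q. \<bar>r - q\<bar> < min (r - s) (t - r) \<longrightarrow> Z r = Z q"
    proof (intro allI impI)
      fix q assume "\<bar>r - q\<bar> < min (r - s) (t - r)"
      hence "s \<le> q" "q \<le> t" by linarith+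
      hence "Z q = Z s" by (rule const)
      moreover have "Z r = Z s" using r by (intro const) auto
      ultimately show "Z r = Z q" by simp
    qed
    show ?thesis by (rule DERIV_local_const[OF dd _ cc]) (use r in simp)
  qed
  have Hd0: "Hd i r = 0" if r: "s < r" "r < t" for r
  proof -
    have r0: "r \<ge> 0" using r s0 by simp
    have Kr: "K r \<ge> 0"
    proof (rule ccontr)
      assume "\<not> K r \<ge> 0" hence Kn: "K r < 0" by simp
      have "eventually (\<lambda>q. W q - W r \<le> (q - r) * (K r + (- K r / 2))) (at_right r)"
        using dplus[OF r0, of "- K r / 2"] Kn by simp
      then obtain b where b: "b > r" "\<forall>q>r. q < b \<longrightarrow> W q - W r \<le> (q - r) * (K r + (- K r / 2))"
        by (auto simp: eventually_at_right_field)
      define q where "q = (r + min b t) / 2"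
      have q: "r < q" "q < b" "q < t" using b r by (auto simp: q_def)
      have "W q - W r \<le> (q - r) * (K r / 2)" using b q by simp
      moreover have "W q = 0" "W r = 0" using W0 q r by auto
      moreover have "(q - r) * (K r / 2) < 0" using q Kn by (simp add: mult_pos_neg)
      ultimately show False by simp
    qed
    have "K r = Z r * (\<Sum>j<n. P j r * Hd j r)" using K_eq[of r] W0[OF r] by simp
    hence "Z r * (\<Sum>j<n. P j r * Hd j r) \<ge> 0" using Kr by simp
    hence S: "(\<Sum>j<n. P j r * Hd j r) \<ge> 0" using Z_pos[OF r0] by (simp add: zero_le_mult_iff)
    have "(\<Sum>j<n. P j r * Hd j r) = P i r * Hd i r + (\<Sum>j\<in>{..<n} - {i}. P j r * Hd j r)"
      by (rule sum.remove) (use i in auto)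
    moreover have "(\<Sum>j\<in>{..<n} - {i}. P j r * Hd j r) \<le> 0"
      by (rule sum_nonpos) (use P_nonneg[OF r0] Hd_nonpos[OF r0] in \<open>auto intro: mult_nonneg_nonpos\<close>)
    ultimately have pi: "P i r * Hd i r \<ge> 0" using S by linarith
    have "x r i > 0" using x_pos[OF i r0] .
    hence "y r i < 1" using rng(5)[OF r0 i(1)] by simp
    hence "P i r > 0" unfolding P_def using Fd_pos[OF i(1)] rng(3)[OF r0 i(1)] by simp
    hence "Hd i r \<ge> 0" using pi by (simp add: zero_le_mult_iff)
    thus ?thesis using Hd_nonpos[OF r0 i(1)] by simp
  qed
  from mvt0[OF dHh[OF _ i(1)] s0 st(2)] obtain \<xi> where
    xi: "s < \<xi>" "\<xi> < t" "Hh i t - Hh i s = (t - s) * Hd i \<xi>" by auto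
  have eqH: "Hh i t = Hh i s" using xi Hd0[OF xi(1,2)] by simp
  from mvt0[OF dx[OF _ i(1)] s0 st(2)] obtain \<eta> where
    eta: "s < \<eta>" "\<eta> < t" "x t i - x s i = (t - s) * (- Hh i \<eta> * Z \<eta>)" by auto
  have eta0: "\<eta> \<ge> 0" using eta s0 by simp
  have "x \<eta> i > 0" using x_pos[OF i eta0] .
  moreover have "g i (x \<eta> i) > 0" using g_pos'[OF i(1)] rng[OF eta0 i(1)] by simp
  ultimately have "Hh i \<eta> > 0" by (simp add: Hh_def G_def)
  hence "Hh i \<eta> * Z \<eta> > 0" using Z_pos[OF eta0] by simp
  hence "(t - s) * (Hh i \<eta> * Z \<eta>) > 0" using st by simp
  hence "x t i < x s i" using eta(3) by linarith
  hence "G i (x t i) < G i (x s i)"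
    using G_mono[OF i(1)] rng[OF s0 i(1)] rng[of t i] s0 st i
    by (auto simp: strict_mono_on_def)
  thus False using eqH by (simp add: Hh_def)
qed

end

context sir begin

lemma W_eventually_nonpos: "\<exists>T>0. W T \<le> 0"
proof (rule ccontr)
  assume "\<not> (\<exists>T>0. W T \<le> 0)"
  hence pos: "W T > 0" if "T > 0" for T using that by auto
  have Zge: "Z t \<ge> Z 0" if t: "t \<ge> 0" for t
  proof (cases "t = 0")
    case True thus ?thesis by simp
  next
    case False
    hence tp: "t > 0" using t by simp
    from mvt0[OF dZ order.refl tp] obtain \<xi> where xi: "0 < \<xi>" "\<xi> < t" "Z t - Z 0 = (t - 0) * W \<xi>" by auto
    have "(t - 0) * W \<xi> > 0" using pos[OF xi(1)] tp by simp
    thus ?thesis using xi(3) by linarith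
  qed
  obtain Bf where Bf: "Bf > 0" "\<forall>j<n. \<forall>s\<in>{0..1}. f j s \<le> Bf" by (rule bound_f)
  define c where "c = \<gamma> * Z 0 / Bf"
  have c: "c > 0" using gamma_pos Z_pos[of 0] Bf(1) by (simp add: c_def)
  define N where "N s = (\<Sum>j<n. x s j + y s j)" for s
  define \<psi>' where "\<psi>' s = c - \<gamma> * (\<Sum>j<n. y s j)" for s
  have der: "((\<lambda>s. N s + c * s) has_real_derivative \<psi>' s) (at s within {0..})" if s: "s \<ge> 0" for s
  proof -
    have "((\<lambda>s. \<Sum>j<n. x s j + y s j) has_real_derivative (\<Sum>j<n. - Hh j s * Z s + U j s)) (at s within {0..})"
    proof (rule DERIV_sum)
      fix j assume "j \<in> {..<n}"
      hence j: "j < n" by simp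
      show "((\<lambda>s. x s j + y s j) has_real_derivative - Hh j s * Z s + U j s) (at s within {0..})"
        by (rule DERIV_add[OF dx[OF s j] dy[OF s j]])
    qed
    moreover have "((\<lambda>s. c * s) has_real_derivative c) (at s within {0..})"
      by (auto intro!: derivative_eq_intros)
    ultimately have "((\<lambda>s. N s + c * s) has_real_derivative (\<Sum>j<n. - Hh j s * Z s + U j s) + c) (at s within {0..})"
      unfolding N_def by (rule DERIV_add)
    moreover have "(\<Sum>j<n. - Hh j s * Z s + U j s) = - \<gamma> * (\<Sum>j<n. y s j)"
      unfolding U_def by (simp add: sum_negf sum_distrib_left)
    ultimately show ?thesis by (simp add: \<psi>'_def)
  qed
  have \<psi>neg: "\<psi>' s \<le> 0" if s: "s \<ge> 0" for s
  proof -
    have "Z 0 \<le> Bf * (\<Sum>j<n. y s j)" using Zge[OF s] Z_bound[OF Bf s] by linarith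
    hence "Z 0 / Bf \<le> (\<Sum>j<n. y s j)" using Bf(1) by (simp add: divide_le_eq mult.commute)
    hence "\<gamma> * (Z 0 / Bf) \<le> \<gamma> * (\<Sum>j<n. y s j)" using gamma_pos by (intro mult_left_mono) auto
    thus ?thesis by (simp add: \<psi>'_def c_def)
  qed
  define T where "T = real n / c + 1"
  have "real n / c \<ge> 0" using c by simp
  hence Tp: "T > 0" by (simp add: T_def)
  from mvt0[OF der order.refl Tp] obtain \<xi> where xi: "0 < \<xi>" "\<xi> < T"
    "(N T + c * T) - (N 0 + c * 0) = (T - 0) * \<psi>' \<xi>" by auto
  have "(T - 0) * \<psi>' \<xi> \<le> 0" using \<psi>neg[of \<xi>] xi Tp by (intro mult_nonneg_nonpos) auto
  hence ineq: "N T + c * T \<le> N 0" using xi(3) by simp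
  have "N T \<ge> 0" unfolding N_def by (rule sum_nonneg) (use rng[of T] Tp in auto)
  moreover have "N 0 \<le> (\<Sum>j<n. (1::real))" unfolding N_def by (rule sum_mono) (use rng[of 0] in auto)
  moreover have "c * T = real n + c" using c by (simp add: T_def algebra_simps)
  ultimately show False using ineq c by simp
qed

lemma main:
  "\<forall>D. ((\<lambda>t. ybar n f (y t)) has_real_derivative D) (at 0 within {0..}) \<longrightarrow>
           (D \<le> 0 \<longrightarrow>
              (\<forall>s t. 0 \<le> s \<and> s < t \<longrightarrow> ybar n f (y t) < ybar n f (y s))) \<and>
           (D > 0 \<longrightarrow>
              (\<exists>th>0. (\<forall>s t. 0 \<le> s \<and> s < t \<and> t \<le> th \<longrightarrow> ybar n f (y s) < ybar n f (y t)) \<and>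
                      (\<forall>s t. th \<le> s \<and> s < t \<longrightarrow> ybar n f (y t) < ybar n f (y s))))"
  unfolding Z_def[symmetric]
proof (intro allI impI)
  fix D assume dD: "(Z has_real_derivative D) (at 0 within {0..})"
  have sub01: "{0<..<1} \<subseteq> {0::real..}" by auto
  have l1: "((\<lambda>t. (Z t - Z 0) / (t - 0)) \<longlongrightarrow> D) (at 0 within {0<..<1})"
    using DERIV_subset[OF dD sub01] by (simp add: has_field_derivative_iff)
  have l2: "((\<lambda>t. (Z t - Z 0) / (t - 0)) \<longlongrightarrow> W 0) (at 0 within {0<..<1})"
    using DERIV_subset[OF dZ[of 0] sub01] by (simp add: has_field_derivative_iff)
  have DW: "D = W 0" using tendsto_unique[OF nb1[of 0 1] l1 l2] by simp
  show "(D \<le> 0 \<longrightarrow> (\<forall>s t. 0 \<le> s \<and> s < t \<longrightarrow> Z t < Z s)) \<and>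
    (0 < D \<longrightarrow> (\<exists>th>0. (\<forall>s t. 0 \<le> s \<and> s < t \<and> t \<le> th \<longrightarrow> Z s < Z t) \<and>
                        (\<forall>s t. th \<le> s \<and> s < t \<longrightarrow> Z t < Z s)))"
  proof (intro conjI impI)
    assume "D \<le> 0"
    hence "W 0 \<le> 0" using DW by simp
    thus "\<forall>s t. 0 \<le> s \<and> s < t \<longrightarrow> Z t < Z s" using Z_strict_after[of 0] by auto
  next
    assume "0 < D"
    hence W0p: "W 0 > 0" using DW by simp
    obtain T where T: "T > 0" "W T \<le> 0" using W_eventually_nonpos by blast
    define A where "A = {0..T} \<inter> W -` {..0}"
    have "closed A" unfolding A_def
      by (rule continuous_closed_preimage[OF continuous_on_subset[OF cont_W]]) auto
    moreover have "bounded A" unfolding A_def by (rule bounded_subset[OF bounded_closed_interval]) auto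
    ultimately have "compact A" by (simp add: compact_eq_bounded_closed)
    moreover have "T \<in> A" using T by (simp add: A_def)
    ultimately obtain th where thA: "th \<in> A" and thmin: "\<forall>t\<in>A. th \<le> t"
      using compact_attains_inf by blast
    have th0: "th \<ge> 0" "W th \<le> 0" "th \<le> T" using thA by (auto simp: A_def)
    have thp: "th > 0" using th0 W0p by (cases "th = 0") auto
    have posW: "W r > 0" if "0 \<le> r" "r < th" for r
    proof (rule ccontr)
      assume "\<not> W r > 0"
      hence "r \<in> A" using that th0 by (auto simp: A_def)
      thus False using thmin that by force
    qed
    show "\<exists>th>0. (\<forall>s t. 0 \<le> s \<and> s < t \<and> t \<le> th \<longrightarrow> Z s < Z t) \<and>
                        (\<forall>s t. th \<le> s \<and> s < t \<longrightarrow> Z t < Z s)"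
    proof (intro exI[of _ th] conjI allI impI)
      show "th > 0" by (rule thp)
    next
      fix s t assume st: "0 \<le> s \<and> s < t \<and> t \<le> th"
      from mvt0[OF dZ, of s t] st obtain \<xi> where xi: "s < \<xi>" "\<xi> < t" "Z t - Z s = (t - s) * W \<xi>" by auto
      have "W \<xi> > 0" using posW[of \<xi>] xi st by simp
      hence "(t - s) * W \<xi> > 0" using st by simp
      thus "Z s < Z t" using xi(3) by linarith
    next
      fix s t assume st: "th \<le> s \<and> s < t"
      show "Z t < Z s" by (rule Z_strict_after[OF th0(1) th0(2)]) (use st in auto)
    qed
  qed
qed

end

theorem theorem2:
  fixes n :: nat and \<gamma> :: real
    and g f :: "nat \<Rightarrow> real \<Rightarrow> real"
    and x y :: "real \<Rightarrow> nat \<Rightarrow> real"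
  assumes n_pos: "n \<ge> 1"
    and gamma_pos: "\<gamma> > 0"
    and g_C1: "\<forall>i<n. C1_on_unit (g i)"
    and f_C1: "\<forall>j<n. C1_on_unit (f j)"
    and g_nonneg: "\<forall>i<n. \<forall>s\<in>{0..1}. 0 \<le> g i s"
    and f_nonneg: "\<forall>j<n. \<forall>s\<in>{0..1}. 0 \<le> f j s"
    and g_pos: "\<forall>(u, v)\<in>S_set n. \<forall>i<n. g i (u i) > 0"
    and f_pos: "\<forall>(u, v)\<in>S_set n. \<forall>j<n. f j (v j) > 0"
    and xg_incr: "\<forall>i<n. strict_mono_on {0..1} (\<lambda>s. s * g i s)"
    and fy_incr: "\<forall>j<n. strict_mono_on {0..1} (\<lambda>s. f j s * s)"
    and fy_concave: "\<forall>j<n. concave_on {0..1} (\<lambda>s. f j s * s)"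
    and sol_in_S: "\<forall>t\<ge>0. (x t, y t) \<in> S_set n"
    and ode_x: "\<forall>t\<ge>0. \<forall>i<n. ((\<lambda>s. x s i) has_real_derivative
                 (- x t i * g i (x t i) * ybar n f (y t))) (at t within {0..})"
    and ode_y: "\<forall>t\<ge>0. \<forall>i<n. ((\<lambda>s. y s i) has_real_derivative
                 (x t i * g i (x t i) * ybar n f (y t) - \<gamma> * y t i)) (at t within {0..})"
    and x0_lneq: "(\<forall>i<n. 0 \<le> x 0 i) \<and> (\<exists>i<n. 0 < x 0 i)"
    and x0_le: "\<forall>i<n. x 0 i \<le> 1 - y 0 i"
    and y0_lneq: "(\<forall>i<n. 1 - y 0 i \<le> 1) \<and> (\<exists>i<n. 1 - y 0 i < 1)"
  shows "\<forall>D. ((\<lambda>t. ybar n f (y t)) has_real_derivative D) (at 0 within {0..}) \<longrightarrow>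
           (D \<le> 0 \<longrightarrow>
              (\<forall>s t. 0 \<le> s \<and> s < t \<longrightarrow> ybar n f (y t) < ybar n f (y s))) \<and>
           (D > 0 \<longrightarrow>
              (\<exists>th>0. (\<forall>s t. 0 \<le> s \<and> s < t \<and> t \<le> th \<longrightarrow> ybar n f (y s) < ybar n f (y t)) \<and>
                      (\<forall>s t. th \<le> s \<and> s < t \<longrightarrow> ybar n f (y t) < ybar n f (y s))))"
proof -
  interpret sir n \<gamma> g f x y
    using n_pos gamma_pos g_C1 f_C1 g_pos f_pos xg_incr fy_incr fy_concave sol_in_S ode_x ode_y
      x0_lneq y0_lneq by (rule sir.intro)
  show ?thesis by (rule main)
qed

end
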